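(* Let $(\mathfrak{g},[\cdot,\ldots,\cdot],\varepsilon,\alpha)$ be an $n$-Hom-Lie color algebra and $\mathcal{P}$ a strict product structure on it. Then $\mathcal{P}$ is a product structure on $\mathfrak{g}$, and, writing $\mathfrak{g}_+=\{x:\mathcal{P}x=x\}$ and $\mathfrak{g}_-=\{x:\mathcal{P}x=-x\}$, for every $1\le i\le n-1$ we have $[a_1,\ldots,a_i,b_{i+1},\ldots,b_n]=0$ for all $a_1,\ldots,a_i\in\mathfrak{g}_+$ and $b_{i+1},\ldots,b_n\in\mathfrak{g}_-$.
   Context: $\mathbb{K}$ is a field of characteristic zero and $\Gamma$ an abelian group. A bicharacter is a map $\varepsilon:\Gamma\times\Gamma\to\mathbb{K}\setminus\{0\}$ with $\varepsilon(a,b)\varepsilon(b,a)=1$, $\varepsilon(a,b+c)=\varepsilon(a,b)\varepsilon(a,c)$, $\varepsilon(a+b,c)=\varepsilon(a,c)\varepsilon(b,c)$. For homogeneous $x,y$, $\varepsilon(x,y)=\varepsilon(|x|,|y|)$ and $\varepsilon(x,y_1+\dots+y_k)=\varepsilon(|x|,|y_1|+\dots+|y_k|)$ ($=1$ for an empty sum). An $n$-Hom-Lie color algebra $(\mathfrak{g},[\cdot,\ldots,\cdot],\varepsilon,\alpha)$ is a $\Gamma$-graded vector space with an $n$-linear bracket of degree zero, a bicharacter $\varepsilon$ and a degree-zero linear map $\alpha$ such that for homogeneous elements: (i) $[x_1,\ldots,x_i,x_{i+1},\ldots,x_n]=-\varepsilon(x_i,x_{i+1})[x_1,\ldots,x_{i+1},x_i,\ldots,x_n]$;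 (ii) $[\alpha(x_1),\ldots,\alpha(x_{n-1}),[y_1,\ldots,y_n]]=\sum_{i=1}^n\varepsilon(x_1+\dots+x_{n-1},y_1+\dots+y_{i-1})[\alpha(y_1),\ldots,\alpha(y_{i-1}),[x_1,\ldots,x_{n-1},y_i],\alpha(y_{i+1}),\ldots,\alpha(y_n)]$. For a degree-zero linear $\mathcal{N}$ set $[\cdot]^0_{\mathcal{N}}=[\cdot]$ and $[x_1,\ldots,x_n]^j_{\mathcal{N}}=\sum_{i_1<\dots<i_j}[x_1,\ldots,\mathcal{N}x_{i_1},\ldots,\mathcal{N}x_{i_j},\ldots,x_n]-\mathcal{N}([x_1,\ldots,x_n]^{j-1}_{\mathcal{N}})$ for $1\le j\le n-1$; $\mathcal{N}$ is a Nijenhuis operator if $\mathcal{N}\alpha=\alpha\mathcal{N}$ and $[\mathcal{N}x_1,\ldots,\mathcal{N}x_n]=\mathcal{N}([x_1,\ldots,x_n]^{n-1}_{\mathcal{N}})$. An almost product structure is a degree-zero linear $\mathcal{P}$ with $\mathcal{P}\neq\pm\mathrm{id}$ and $\mathcal{P}^2=\mathrm{id}$; a product structure is an almost product structure which is a Nijenhuis operator. A degree-zero linear map $\Theta$ is in the centroid if $\Theta\alpha=\alpha\Theta$ and $\Theta([x_1,x_2,\ldots,x_n])=[\Theta x_1,x_2,\ldots,x_n]$ for all $x_i$. A strict product structure is an almost product structure lying in the centroid. *)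

theory Defs
  imports Complex_Main
begin

(* The underlying space g is the whole type 'v, a vector space over 'k via scale.
   Brackets are functions on lists; only lists of length n matter. *)

definition graded_space ::
  "('k::field \<Rightarrow> 'v::ab_group_add \<Rightarrow> 'v) \<Rightarrow> ('g::ab_group_add \<Rightarrow> 'v set) \<Rightarrow> bool" where
  "graded_space scale G \<longleftrightarrow>
     vector_space scale \<and>
     (\<forall>a. module.subspace scale (G a)) \<and>
     (\<forall>v. \<exists>S c. finite S \<and> (\<forall>a\<in>S. c a \<in> G a) \<and> v = sum c S) \<and>
     (\<forall>S c. finite S \<and> (\<forall>a\<in>S. c a \<in> G a) \<and> sum c S = 0 \<longrightarrow> (\<forall>a\<in>S. c a = 0))"

definition bicharacter :: "('g::ab_group_add \<Rightarrow> 'g \<Rightarrow> 'k::field) \<Rightarrow> bool" where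
  "bicharacter eps \<longleftrightarrow>
     (\<forall>a b. eps a b \<noteq> 0) \<and>
     (\<forall>a b. eps a b * eps b a = 1) \<and>
     (\<forall>a b c. eps a (b + c) = eps a b * eps a c) \<and>
     (\<forall>a b c. eps (a + b) c = eps a c * eps b c)"

definition deg0_linear ::
  "('k::field \<Rightarrow> 'v::ab_group_add \<Rightarrow> 'v) \<Rightarrow> ('g \<Rightarrow> 'v set) \<Rightarrow> ('v \<Rightarrow> 'v) \<Rightarrow> bool" where
  "deg0_linear scale G f \<longleftrightarrow> Vector_Spaces.linear scale scale f \<and> (\<forall>a. f ` G a \<subseteq> G a)"

definition swap_adj :: "nat \<Rightarrow> 'a list \<Rightarrow> 'a list" where
  "swap_adj i xs = xs[i := xs ! Suc i, Suc i := xs ! i]"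

definition n_hom_lie_color ::
  "('k::field_char_0 \<Rightarrow> 'v::ab_group_add \<Rightarrow> 'v) \<Rightarrow> ('g::ab_group_add \<Rightarrow> 'v set) \<Rightarrow> nat
    \<Rightarrow> ('v list \<Rightarrow> 'v) \<Rightarrow> ('g \<Rightarrow> 'g \<Rightarrow> 'k) \<Rightarrow> ('v \<Rightarrow> 'v) \<Rightarrow> bool" where
  "n_hom_lie_color scale G n br eps alpha \<longleftrightarrow>
     1 \<le> n \<and> graded_space scale G \<and> bicharacter eps \<and> deg0_linear scale G alpha \<and>
     \<comment> \<open>n-linearity\<close>
     (\<forall>xs i u w. length xs = n \<and> i < n \<longrightarrow>
        br (xs[i := u + w]) = br (xs[i := u]) + br (xs[i := w])) \<and>
     (\<forall>xs i c u. length xs = n \<and> i < n \<longrightarrow>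
        br (xs[i := scale c u]) = scale c (br (xs[i := u]))) \<and>
     \<comment> \<open>degree zero\<close>
     (\<forall>xs ds. length xs = n \<and> length ds = n \<and> (\<forall>i<n. xs ! i \<in> G (ds ! i))
        \<longrightarrow> br xs \<in> G (sum_list ds)) \<and>
     \<comment> \<open>(i) color skew-symmetry\<close>
     (\<forall>xs ds i. length xs = n \<and> length ds = n \<and> (\<forall>k<n. xs ! k \<in> G (ds ! k)) \<and> Suc i < n
        \<longrightarrow> br xs = - scale (eps (ds ! i) (ds ! Suc i)) (br (swap_adj i xs))) \<and>
     \<comment> \<open>(ii) color Hom-Nambu (fundamental) identity\<close>
     (\<forall>xs dx ys dy. length xs = n - 1 \<and> length dx = n - 1 \<and> length ys = n \<and> length dy = n \<and>
        (\<forall>k<n - 1. xs ! k \<in> G (dx ! k)) \<and> (\<forall>k<n. ys ! k \<in> G (dy ! k)) \<longrightarrow>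
        br (map alpha xs @ [br ys]) =
          (\<Sum>i<n. scale (eps (sum_list dx) (sum_list (take i dy)))
             (br (map alpha (take i ys) @ [br (xs @ [ys ! i])] @ map alpha (drop (Suc i) ys)))))"

definition apply_at :: "('v \<Rightarrow> 'v) \<Rightarrow> nat set \<Rightarrow> 'v list \<Rightarrow> 'v list" where
  "apply_at N S xs = map (\<lambda>k. if k \<in> S then N (xs ! k) else xs ! k) [0..<length xs]"

fun nij_bracket ::
  "nat \<Rightarrow> ('v list \<Rightarrow> 'v::ab_group_add) \<Rightarrow> ('v \<Rightarrow> 'v) \<Rightarrow> nat \<Rightarrow> 'v list \<Rightarrow> 'v" where
  "nij_bracket n br N 0 xs = br xs"
| "nij_bracket n br N (Suc j) xs =
     (\<Sum>S\<in>{S. S \<subseteq> {..<n} \<and> card S = Suc j}. br (apply_at N S xs))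
     - N (nij_bracket n br N j xs)"

definition nijenhuis ::
  "('k::field_char_0 \<Rightarrow> 'v::ab_group_add \<Rightarrow> 'v) \<Rightarrow> ('g::ab_group_add \<Rightarrow> 'v set) \<Rightarrow> nat
    \<Rightarrow> ('v list \<Rightarrow> 'v) \<Rightarrow> ('v \<Rightarrow> 'v) \<Rightarrow> ('v \<Rightarrow> 'v) \<Rightarrow> bool" where
  "nijenhuis scale G n br alpha N \<longleftrightarrow>
     deg0_linear scale G N \<and> N \<circ> alpha = alpha \<circ> N \<and>
     (\<forall>xs. length xs = n \<longrightarrow> br (map N xs) = N (nij_bracket n br N (n - 1) xs))"

definition almost_product ::
  "('k::field_char_0 \<Rightarrow> 'v::ab_group_add \<Rightarrow> 'v) \<Rightarrow> ('g::ab_group_add \<Rightarrow> 'v set) \<Rightarrow> ('v \<Rightarrow> 'v) \<Rightarrow> bool" where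
  "almost_product scale G P \<longleftrightarrow>
     deg0_linear scale G P \<and> P \<noteq> id \<and> P \<noteq> (\<lambda>x. - x) \<and> P \<circ> P = id"

definition product_structure ::
  "('k::field_char_0 \<Rightarrow> 'v::ab_group_add \<Rightarrow> 'v) \<Rightarrow> ('g::ab_group_add \<Rightarrow> 'v set) \<Rightarrow> nat
    \<Rightarrow> ('v list \<Rightarrow> 'v) \<Rightarrow> ('v \<Rightarrow> 'v) \<Rightarrow> ('v \<Rightarrow> 'v) \<Rightarrow> bool" where
  "product_structure scale G n br alpha P \<longleftrightarrow>
     almost_product scale G P \<and> nijenhuis scale G n br alpha P"

definition centroid ::
  "('k::field_char_0 \<Rightarrow> 'v::ab_group_add \<Rightarrow> 'v) \<Rightarrow> ('g::ab_group_add \<Rightarrow> 'v set) \<Rightarrow> nat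
    \<Rightarrow> ('v list \<Rightarrow> 'v) \<Rightarrow> ('v \<Rightarrow> 'v) \<Rightarrow> ('v \<Rightarrow> 'v) \<Rightarrow> bool" where
  "centroid scale G n br alpha T \<longleftrightarrow>
     deg0_linear scale G T \<and> T \<circ> alpha = alpha \<circ> T \<and>
     (\<forall>xs. length xs = n \<longrightarrow> T (br xs) = br (xs[0 := T (xs ! 0)]))"

definition strict_product_structure ::
  "('k::field_char_0 \<Rightarrow> 'v::ab_group_add \<Rightarrow> 'v) \<Rightarrow> ('g::ab_group_add \<Rightarrow> 'v set) \<Rightarrow> nat
    \<Rightarrow> ('v list \<Rightarrow> 'v) \<Rightarrow> ('v \<Rightarrow> 'v) \<Rightarrow> ('v \<Rightarrow> 'v) \<Rightarrow> bool" where
  "strict_product_structure scale G n br alpha P \<longleftrightarrow>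
     almost_product scale G P \<and> centroid scale G n br alpha P"

end

theory Submission
  imports Defs
begin

lemma ml_zero:
  fixes F :: "'a::ab_group_add list \<Rightarrow> 'b::ab_group_add"
  assumes add: "\<forall>xs i u w. length xs = n \<and> i < n \<longrightarrow> F (xs[i := u + w]) = F (xs[i := u]) + F (xs[i := w])"
    and "length xs = n" "i < n"
  shows "F (xs[i := 0]) = (0::'b::ab_group_add)"
proof -
  have "F (xs[i := 0 + 0]) = F (xs[i := 0]) + F (xs[i := 0])" using add[rule_format, of xs i 0 0] assms by simp
  then have "F (xs[i := 0]) + 0 = F (xs[i := 0]) + F (xs[i := 0])" by simp
  then show ?thesis using add_left_cancel by metis
qed

lemma ml_sum:
  fixes F :: "'a::ab_group_add list \<Rightarrow> 'b::ab_group_add"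
  assumes add: "\<forall>xs i u w. length xs = n \<and> i < n \<longrightarrow> F (xs[i := u + w]) = F (xs[i := u]) + F (xs[i := w])"
    and "length xs = n" "i < n" "finite A"
  shows "F (xs[i := sum c A]) = (\<Sum>a\<in>A. F (xs[i := c a]) :: 'b::ab_group_add)"
  using \<open>finite A\<close>
proof (induction A rule: finite_induct)
  case empty
  then show ?case using ml_zero[OF add assms(2,3)] by simp
next
  case (insert x A)
  have "F (xs[i := sum c (insert x A)]) = F (xs[i := c x + sum c A])" using insert.hyps by simp
  also have "\<dots> = F (xs[i := c x]) + F (xs[i := sum c A])" using add[rule_format, of xs i "c x" "sum c A"] assms(2,3) by simp
  also have "\<dots> = (\<Sum>a\<in>insert x A. F (xs[i := c a]))" using insert by simp
  finally show ?case .
qed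

lemma ml_extend:
  fixes F :: "'a::ab_group_add list \<Rightarrow> 'b::ab_group_add"
  assumes gr: "\<forall>v. \<exists>S c. finite S \<and> (\<forall>a\<in>S. c a \<in> G a) \<and> v = sum c S"
    and addF: "\<forall>xs i u w. length xs = n \<and> i < n \<longrightarrow> F (xs[i := u + w]) = F (xs[i := u]) + F (xs[i := w])"
    and addH: "\<forall>xs i u w. length xs = n \<and> i < n \<longrightarrow> H (xs[i := u + w]) = H (xs[i := u]) + H (xs[i := w])"
    and hom: "\<forall>xs ds. length xs = n \<and> length ds = n \<and> (\<forall>k<n. xs ! k \<in> G (ds ! k)) \<longrightarrow> F xs = (H xs :: 'b::ab_group_add)"
    and len: "length xs = n"
  shows "F xs = H xs"
proof -
  have claim: "\<forall>xs. length xs = n \<and> (\<forall>p. k \<le> p \<and> p < n \<longrightarrow> (\<exists>d. xs ! p \<in> G d)) \<longrightarrow> F xs = H xs"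
    if "k \<le> n" for k
    using that
  proof (induction k)
    case 0
    show ?case
    proof (intro allI impI)
      fix xs assume h: "length xs = n \<and> (\<forall>p. 0 \<le> p \<and> p < n \<longrightarrow> (\<exists>d. xs ! p \<in> G d))"
      define ds where "ds = map (\<lambda>p. SOME d. xs ! p \<in> G d) [0..<n]"
      have "\<forall>k<n. xs ! k \<in> G (ds ! k)"
        using h unfolding ds_def by (auto intro: someI_ex)
      moreover have "length ds = n" unfolding ds_def by simp
      ultimately show "F xs = H xs" using hom[rule_format, of xs ds] h by simp
    qed
  next
    case (Suc k)
    show ?case
    proof (intro allI impI)
      fix xs assume h: "length xs = n \<and> (\<forall>p. Suc k \<le> p \<and> p < n \<longrightarrow> (\<exists>d. xs ! p \<in> G d))"
      obtain S c where Sc: "finite S" "\<forall>a\<in>S. c a \<in> G a" "xs ! k = sum c S" using gr by blast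
      have kn: "k < n" using Suc by simp
      have xs_eq: "xs = xs[k := sum c S]" using Sc(3) by (metis list_update_id)
      have each: "F (xs[k := c a]) = H (xs[k := c a])" if "a \<in> S" for a
      proof -
        have "\<forall>p. k \<le> p \<and> p < n \<longrightarrow> (\<exists>d. xs[k := c a] ! p \<in> G d)"
        proof (intro allI impI)
          fix p assume p: "k \<le> p \<and> p < n"
          show "\<exists>d. xs[k := c a] ! p \<in> G d"
          proof (cases "p = k")
            case True then show ?thesis using Sc(2) that h kn by auto
          next
            case False then show ?thesis using h p by auto
          qed
        qed
        moreover have "length (xs[k := c a]) = n" using h by simp
        ultimately show ?thesis using Suc.IH kn by simp
      qed
      have "F xs = F (xs[k := sum c S])" using xs_eq by simp
      also have "\<dots> = (\<Sum>a\<in>S. F (xs[k := c a]))"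
        using ml_sum[OF addF _ kn Sc(1), of xs c] h by simp
      also have "\<dots> = (\<Sum>a\<in>S. H (xs[k := c a]))" using each by simp
      also have "\<dots> = H (xs[k := sum c S])"
        using ml_sum[OF addH _ kn Sc(1), of xs c] h by simp
      also have "\<dots> = H xs" using xs_eq by simp
      finally show "F xs = H xs" .
    qed
  qed
  show ?thesis using claim[of n] len by auto
qed


lemma apply_at_len[simp]: "length (apply_at N S xs) = length xs"
  by (simp add: apply_at_def)

lemma apply_at_nth: "k < length xs \<Longrightarrow> apply_at N S xs ! k = (if k \<in> S then N (xs ! k) else xs ! k)"
  by (simp add: apply_at_def)

lemma apply_at_insert:
  assumes "j < length xs" "j \<notin> S"
  shows "apply_at N (insert j S) xs = (apply_at N S xs)[j := N (apply_at N S xs ! j)]"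
  by (rule nth_equalityI) (auto simp: apply_at_nth nth_list_update assms)

lemma apply_at_empty: "apply_at N {} xs = xs"
  by (rule nth_equalityI) (auto simp: apply_at_nth)

lemma apply_at_all: "length xs = n \<Longrightarrow> apply_at N {..<n} xs = map N xs"
  by (rule nth_equalityI) (auto simp: apply_at_nth)

lemma swap_upd:
  assumes "Suc j < length xs"
  shows "swap_adj j (xs[Suc j := v]) = (swap_adj j xs)[j := v]"
proof (rule nth_equalityI)
  show "length (swap_adj j (xs[Suc j := v])) = length ((swap_adj j xs)[j := v])"
    by (simp add: swap_adj_def)
  fix i assume "i < length (swap_adj j (xs[Suc j := v]))"
  then have i: "i < length xs" by (simp add: swap_adj_def)
  show "swap_adj j (xs[Suc j := v]) ! i = (swap_adj j xs)[j := v] ! i"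
    unfolding swap_adj_def
    using i assms by (cases "i = j"; cases "i = Suc j") (simp_all add: nth_list_update)
qed

theorem lemma6p10:
  fixes scale :: "'k::field_char_0 \<Rightarrow> 'v::ab_group_add \<Rightarrow> 'v"
    and G :: "'g::ab_group_add \<Rightarrow> 'v set"
    and n :: nat and br :: "'v list \<Rightarrow> 'v" and eps :: "'g \<Rightarrow> 'g \<Rightarrow> 'k"
    and alpha P :: "'v \<Rightarrow> 'v"
  assumes "n_hom_lie_color scale G n br eps alpha"
    and "strict_product_structure scale G n br alpha P"
  shows "product_structure scale G n br alpha P \<and>
    (\<forall>i. 1 \<le> i \<and> i \<le> n - 1 \<longrightarrow>
       (\<forall>as bs. length as = i \<and> length bs = n - i \<and>
          (\<forall>a\<in>set as. P a = a) \<and> (\<forall>b\<in>set bs. P b = - b) \<longrightarrow> br (as @ bs) = 0))"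
proof -
  have n1: "1 \<le> n" and gs: "graded_space scale G"
    and addB: "\<forall>xs i u w. length xs = n \<and> i < n \<longrightarrow>
        br (xs[i := u + w]) = br (xs[i := u]) + br (xs[i := w])"
    and scaleB: "\<forall>xs i c u. length xs = n \<and> i < n \<longrightarrow>
        br (xs[i := scale c u]) = scale c (br (xs[i := u]))"
    and skew: "\<forall>xs ds i. length xs = n \<and> length ds = n \<and> (\<forall>k<n. xs ! k \<in> G (ds ! k)) \<and> Suc i < n
        \<longrightarrow> br xs = - scale (eps (ds ! i) (ds ! Suc i)) (br (swap_adj i xs))"
    using assms(1) unfolding n_hom_lie_color_def by blast+
  have ap: "almost_product scale G P" and dl: "deg0_linear scale G P"
    and PP: "P \<circ> P = id" and Pcomm: "P \<circ> alpha = alpha \<circ> P"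
    and cent0: "\<forall>xs. length xs = n \<longrightarrow> P (br xs) = br (xs[0 := P (xs ! 0)])"
    using assms(2) unfolding strict_product_structure_def almost_product_def centroid_def by blast+
  have vs: "vector_space scale" and gr: "\<forall>v. \<exists>S c. finite S \<and> (\<forall>a\<in>S. c a \<in> G a) \<and> v = sum c S"
    using gs unfolding graded_space_def by blast+
  interpret V: vector_space scale by (rule vs)
  have lin: "Vector_Spaces.linear scale scale P" and PG: "\<And>a. P ` G a \<subseteq> G a"
    using dl unfolding deg0_linear_def by blast+
  have Padd: "\<And>x y. P (x + y) = P x + P y" and Pscale: "\<And>c x. P (scale c x) = scale c (P x)"
    using lin by (simp_all add: linear_iff_module_hom module_hom.add module_hom.scale)
  have Pneg: "\<And>x. P (- x) = - P x"
    using lin by (simp add: linear_iff_module_hom module_hom.neg)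
  have PPx: "\<And>x. P (P x) = x" using PP by (metis comp_apply id_apply)

  have hom: "\<forall>xs ds. length xs = n \<and> length ds = n \<and> (\<forall>k<n. xs ! k \<in> G (ds ! k)) \<and> j < n
      \<longrightarrow> P (br xs) = br (xs[j := P (xs ! j)])" for j
  proof (induction j)
    case 0
    then show ?case using cent0 by simp
  next
    case (Suc j)
    show ?case
    proof (intro allI impI)
      fix xs ds assume h: "length xs = n \<and> length ds = n \<and> (\<forall>k<n. xs ! k \<in> G (ds ! k)) \<and> Suc j < n"
      define e where "e = eps (ds ! j) (ds ! Suc j)"
      define ys where "ys = xs[Suc j := P (xs ! Suc j)]"
      have ylen: "length ys = n" using h by (simp add: ys_def)
      have yh: "\<forall>k<n. ys ! k \<in> G (ds ! k)"
      proof (intro allI impI)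
        fix k assume "k < n"
        then show "ys ! k \<in> G (ds ! k)" using h PG unfolding ys_def
          by (cases "k = Suc j") (auto simp: nth_list_update)
      qed
      define sw where "sw = swap_adj j xs"
      define dsw where "dsw = swap_adj j ds"
      have swlen: "length sw = n" "length dsw = n" using h by (simp_all add: sw_def dsw_def swap_adj_def)
      have swh: "\<forall>k<n. sw ! k \<in> G (dsw ! k)"
      proof (intro allI impI)
        fix k assume "k < n"
        then show "sw ! k \<in> G (dsw ! k)" using h unfolding sw_def dsw_def swap_adj_def
          by (auto simp: nth_list_update)
      qed
      have swj: "sw ! j = xs ! Suc j" using h by (simp add: sw_def swap_adj_def nth_list_update)
      have sy: "swap_adj j ys = sw[j := P (sw ! j)]"
        using swap_upd[of j xs "P (xs ! Suc j)"] h swj by (simp add: ys_def sw_def)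
      have IH: "P (br sw) = br (sw[j := P (sw ! j)])"
        using Suc.IH[rule_format, of sw dsw] swlen swh h by simp
      have e1: "br xs = - scale e (br sw)" using skew h unfolding e_def sw_def by blast
      have e2: "br ys = - scale e (br (swap_adj j ys))" using skew h ylen yh unfolding e_def by blast
      have "P (br xs) = - scale e (P (br sw))" using e1 Pneg Pscale by simp
      also have "\<dots> = br ys" using IH e2 sy by simp
      finally show "P (br xs) = br (xs[Suc j := P (xs ! Suc j)])" by (simp add: ys_def)
    qed
  qed

  have cent: "P (br xs) = br (xs[j := P (xs ! j)])" if "length xs = n" "j < n" for xs j
  proof -
    have addF: "\<forall>xs i u w. length xs = n \<and> i < n \<longrightarrow>
        P (br (xs[i := u + w])) = P (br (xs[i := u])) + P (br (xs[i := w]))"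
      using addB Padd by simp
    have addH: "\<forall>xs i u w. length xs = n \<and> i < n \<longrightarrow>
        br ((xs[i := u + w])[j := P (xs[i := u + w] ! j)]) =
        br ((xs[i := u])[j := P (xs[i := u] ! j)]) + br ((xs[i := w])[j := P (xs[i := w] ! j)])"
    proof (intro allI impI)
      fix xs :: "'v list" and i :: nat and u w :: 'v assume h: "length xs = n \<and> i < n"
      show "br ((xs[i := u + w])[j := P (xs[i := u + w] ! j)]) =
        br ((xs[i := u])[j := P (xs[i := u] ! j)]) + br ((xs[i := w])[j := P (xs[i := w] ! j)])"
      proof (cases "i = j")
        case True
        then show ?thesis using h addB Padd by simp
      next
        case False
        have eq: "\<And>v. (xs[i := v])[j := P (xs[i := v] ! j)] = (xs[j := P (xs ! j)])[i := v]"
          using False by (simp add: list_update_swap)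
        show ?thesis unfolding eq using h addB by simp
      qed
    qed
    have homj: "\<forall>xs ds. length xs = n \<and> length ds = n \<and> (\<forall>k<n. xs ! k \<in> G (ds ! k)) \<longrightarrow>
        P (br xs) = br (xs[j := P (xs ! j)])"
      using hom[of j] that(2) by blast
    show ?thesis
      using ml_extend[OF gr addF addH homj that(1)] by simp
  qed

  have appl: "br (apply_at P S xs) = (P ^^ card S) (br xs)" if "S \<subseteq> {..<n}" "length xs = n" for S xs
  proof -
    have "finite S" using that(1) finite_subset by blast
    then show ?thesis using that
    proof (induction S rule: finite_induct)
      case empty
      then show ?case by (simp add: apply_at_empty)
    next
      case (insert j S)
      have jn: "j < n" using insert.prems by auto
      have "br (apply_at P (insert j S) xs) = br ((apply_at P S xs)[j := P (apply_at P S xs ! j)])"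
        using apply_at_insert[of j xs S P] jn insert.prems insert.hyps by simp
      also have "\<dots> = P (br (apply_at P S xs))" using cent[of "apply_at P S xs" j] jn insert.prems by simp
      also have "\<dots> = (P ^^ card (insert j S)) (br xs)" using insert by simp
      finally show ?case .
    qed
  qed

  obtain m where nm: "n = Suc m" using n1 by (cases n) auto
  have nij: "\<forall>xs. length xs = n \<longrightarrow>
      nij_bracket n br P j xs = scale (of_nat (m choose j)) ((P ^^ j) (br xs))" for j
  proof (induction j)
    case 0
    then show ?case by simp
  next
    case (Suc j)
    show ?case
    proof (intro allI impI)
      fix xs :: "'v list" assume h: "length xs = n"
      let ?A = "{S. S \<subseteq> {..<n} \<and> card S = Suc j}"
      have "(\<Sum>S\<in>?A. br (apply_at P S xs)) = (\<Sum>S\<in>?A. (P ^^ Suc j) (br xs))"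
        using appl h by (intro sum.cong) auto
      also have "\<dots> = scale (of_nat (card ?A)) ((P ^^ Suc j) (br xs))"
        by (rule V.sum_constant_scale)
      also have "card ?A = n choose Suc j" using n_subsets[of "{..<n}" "Suc j"] by simp
      finally have s1: "(\<Sum>S\<in>?A. br (apply_at P S xs)) = scale (of_nat (n choose Suc j)) ((P ^^ Suc j) (br xs))" .
      have s2: "P (nij_bracket n br P j xs) = scale (of_nat (m choose j)) ((P ^^ Suc j) (br xs))"
        using Suc.IH h Pscale by simp
      have "nij_bracket n br P (Suc j) xs
          = scale (of_nat (n choose Suc j)) ((P ^^ Suc j) (br xs)) - scale (of_nat (m choose j)) ((P ^^ Suc j) (br xs))"
        using s1 s2 by simp
      also have "\<dots> = scale (of_nat (n choose Suc j) - of_nat (m choose j)) ((P ^^ Suc j) (br xs))"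
        by (simp add: V.scale_left_diff_distrib)
      also have "of_nat (n choose Suc j) - of_nat (m choose j) = (of_nat (m choose Suc j) :: 'k)"
        using nm by simp
      finally show "nij_bracket n br P (Suc j) xs = scale (of_nat (m choose Suc j)) ((P ^^ Suc j) (br xs))" .
    qed
  qed

  have nj: "nijenhuis scale G n br alpha P"
    unfolding nijenhuis_def
  proof (intro conjI allI impI)
    show "deg0_linear scale G P" by (rule dl)
    show "P \<circ> alpha = alpha \<circ> P" by (rule Pcomm)
    fix xs :: "'v list" assume h: "length xs = n"
    have "br (map P xs) = br (apply_at P {..<n} xs)" using apply_at_all[OF h] by simp
    also have "\<dots> = (P ^^ n) (br xs)" using appl[of "{..<n}" xs] h by simp
    also have "\<dots> = P (nij_bracket n br P (n - 1) xs)" using nij[of "n - 1"] h nm by simp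
    finally show "br (map P xs) = P (nij_bracket n br P (n - 1) xs)" .
  qed
  have ps: "product_structure scale G n br alpha P"
    unfolding product_structure_def using ap nj by blast

  have part2: "br (as @ bs) = 0"
    if hi: "1 \<le> i" "i \<le> n - 1" and hl: "length as = i" "length bs = n - i"
      and pa: "\<forall>a\<in>set as. P a = a" and pb: "\<forall>b\<in>set bs. P b = - b" for i as bs
  proof -
    define xs where "xs = as @ bs"
    have xl: "length xs = n" using hi hl by (simp add: xs_def)
    have x0: "P (xs ! 0) = xs ! 0"
      using pa hi hl by (simp add: xs_def nth_append)
    have "P (br xs) = br (xs[0 := P (xs ! 0)])" using cent xl nm by simp
    also have "\<dots> = br xs" using x0 by simp
    finally have e1: "P (br xs) = br xs" .
    have lastin: "xs ! m \<in> set bs"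
      using hi hl nm by (simp add: xs_def nth_append)
    have xm: "P (xs ! m) = scale (-1) (xs ! m)" using pb lastin by simp
    have "P (br xs) = br (xs[m := P (xs ! m)])" using cent xl nm by simp
    also have "\<dots> = - br xs" using scaleB[rule_format, of xs m "-1" "xs ! m"] xm xl nm by simp
    finally have "br xs = - br xs" using e1 by simp
    then have "br xs + br xs = 0" by (metis add.right_inverse)
    moreover have "scale (1 + 1) (br xs) = br xs + br xs"
      by (simp only: V.scale_left_distrib V.scale_one)
    ultimately have "scale (1 + 1) (br xs) = 0" by simp
    then have "br xs = 0" using V.scale_eq_0_iff[of "1 + 1" "br xs"] by simp
    then show ?thesis by (simp add: xs_def)
  qed
  show ?thesis using ps part2 by blast
qed

end
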